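(* Let $X$ be a regular space. Then $X$ is set star compact if and only if $X$ is countably compact.
   Context: For a family $\mathcal U$ of subsets of $X$ and $A\subseteq X$, $st(A,\mathcal U)=\bigcup\{U\in\mathcal U: U\cap A\neq\emptyset\}$. A space $X$ is set star compact if for every nonempty $A\subseteq X$ and every family $\mathcal U$ of open subsets of $X$ with $\overline A\subseteq\bigcup\mathcal U$ there is a finite $\mathcal V\subseteq\mathcal U$ with $A\subseteq st(\bigcup\mathcal V,\mathcal U)$. No separation axioms are assumed beyond those stated. *)

theory Defs
  imports "HOL-Analysis.Analysis"
begin

definition star :: "'a set \<Rightarrow> 'a set set \<Rightarrow> 'a set" where
  "star A \<U> = \<Union>{U \<in> \<U>. U \<inter> A \<noteq> {}}"

definition set_star_compact :: "'a topology \<Rightarrow> bool" where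
  "set_star_compact X \<longleftrightarrow>
     (\<forall>A \<U>. A \<noteq> {} \<and> A \<subseteq> topspace X \<and> (\<forall>U\<in>\<U>. openin X U) \<and> X closure_of A \<subseteq> \<Union>\<U>
        \<longrightarrow> (\<exists>\<V>. \<V> \<subseteq> \<U> \<and> finite \<V> \<and> A \<subseteq> star (\<Union>\<V>) \<U>))"

definition countably_compact_space :: "'a topology \<Rightarrow> bool" where
  "countably_compact_space X \<longleftrightarrow>
     (\<forall>\<U>. countable \<U> \<and> (\<forall>U\<in>\<U>. openin X U) \<and> topspace X \<subseteq> \<Union>\<U>
        \<longrightarrow> (\<exists>\<V>. \<V> \<subseteq> \<U> \<and> finite \<V> \<and> topspace X \<subseteq> \<Union>\<V>))"

end

theory Submission
  imports Defs
begin

lemma cc_imp_ssc: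
  assumes cc: "countably_compact_space X"
  shows "set_star_compact X"
  unfolding set_star_compact_def
proof (intro allI impI)
  have ccr: "\<And>\<W>. countable \<W> \<Longrightarrow> (\<forall>U\<in>\<W>. openin X U) \<Longrightarrow> topspace X \<subseteq> \<Union>\<W> \<Longrightarrow> \<exists>\<V>. \<V> \<subseteq> \<W> \<and> finite \<V> \<and> topspace X \<subseteq> \<Union>\<V>"
    using cc unfolding countably_compact_space_def by blast
  fix A \<U>
  assume h: "A \<noteq> {} \<and> A \<subseteq> topspace X \<and> (\<forall>U\<in>\<U>. openin X U) \<and> X closure_of A \<subseteq> \<Union>\<U>"
  show "\<exists>\<V>. \<V> \<subseteq> \<U> \<and> finite \<V> \<and> A \<subseteq> star (\<Union>\<V>) \<U>"
  proof (rule ccontr)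
    assume no: "\<not> ?thesis"
    have "\<forall>\<V>. \<exists>p. \<V> \<subseteq> \<U> \<and> finite \<V> \<longrightarrow> p \<in> A - star (\<Union>\<V>) \<U>" using no by blast
    then have "\<exists>p. \<forall>\<V>. \<V> \<subseteq> \<U> \<and> finite \<V> \<longrightarrow> p \<V> \<in> A - star (\<Union>\<V>) \<U>" by (rule choice)
    then obtain p where p: "\<And>\<V>. \<V> \<subseteq> \<U> \<Longrightarrow> finite \<V> \<Longrightarrow> p \<V> \<in> A - star (\<Union>\<V>) \<U>" by blast
    have AU: "A \<subseteq> \<Union>\<U>" using h closure_of_subset[of A X] by blast
    have "\<forall>x. \<exists>U. x \<in> A \<longrightarrow> U \<in> \<U> \<and> x \<in> U" using AU by blast
    then have "\<exists>u. \<forall>x. x \<in> A \<longrightarrow> u x \<in> \<U> \<and> x \<in> u x" by (rule choice)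
    then obtain u where u: "\<And>x. x \<in> A \<Longrightarrow> u x \<in> \<U> \<and> x \<in> u x" by blast
    define V where "V = rec_nat {} (\<lambda>n W. insert (u (p W)) W)"
    have V0: "V 0 = {}" and VS: "\<And>n. V (Suc n) = insert (u (p (V n))) (V n)" by (simp_all add: V_def)
    have Vfin: "V n \<subseteq> \<U> \<and> finite (V n)" for n
    proof (induction n)
      case 0 then show ?case by (simp add: V0)
    next
      case (Suc n)
      then have "p (V n) \<in> A" using p by blast
      then show ?case using Suc u by (simp add: VS)
    qed
    define x where "x n = p (V n)" for n
    have xA: "x n \<in> A" for n using p Vfin unfolding x_def by blast
    have xnot: "x n \<notin> star (\<Union>(V n)) \<U>" for n using p Vfin unfolding x_def by blast
    have mono: "n < m \<Longrightarrow> u (x n) \<in> V m" for n m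
    proof (induction m)
      case 0 then show ?case by simp
    next
      case (Suc m) then show ?case by (auto simp: VS x_def less_Suc_eq)
    qed
    have key: "x m \<notin> W" if "n < m" "W \<in> \<U>" "x n \<in> W" for n m W
    proof
      assume "x m \<in> W"
      have "u (x n) \<in> V m" using mono that by blast
      moreover have "x n \<in> u (x n)" using u xA by blast
      ultimately have "W \<inter> \<Union>(V m) \<noteq> {}" using that by blast
      then have "x m \<in> star (\<Union>(V m)) \<U>" using \<open>x m \<in> W\<close> that(2) unfolding star_def by blast
      then show False using xnot by blast
    qed
    have xtop: "x ` S \<subseteq> topspace X" for S using xA h by blast
    define C where "C m = X closure_of (x ` {m..})" for m
    have Canti: "C k \<subseteq> C m" if "m \<le> k" for m k
      unfolding C_def using that by (intro closure_of_mono image_mono) auto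
    have "\<exists>q. \<forall>m. q \<in> C m"
    proof (rule ccontr)
      assume nq: "\<not> (\<exists>q. \<forall>m. q \<in> C m)"
      let ?W = "range (\<lambda>m. topspace X - C m)"
      have "countable ?W" by simp
      moreover have "\<forall>U\<in>?W. openin X U" unfolding C_def by (simp add: openin_diff closedin_closure_of)
      moreover have "topspace X \<subseteq> \<Union>?W"
      proof
        fix z assume z: "z \<in> topspace X"
        from nq obtain m where "z \<notin> C m" by auto
        then show "z \<in> \<Union>?W" using z by auto
      qed
      ultimately have "\<exists>\<V>. \<V> \<subseteq> ?W \<and> finite \<V> \<and> topspace X \<subseteq> \<Union>\<V>"
        by (rule ccr)
      then obtain \<V> where V: "\<V> \<subseteq> ?W" "finite \<V>" "topspace X \<subseteq> \<Union>\<V>"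
        by blast
      from finite_subset_image[OF V(2) V(1)]
      obtain F where F: "finite F" "\<V> = (\<lambda>m. topspace X - C m) ` F"
        by (elim exE conjE) (rule that)
      obtain k where k: "F \<subseteq> {..<k}" using finite_nat_bounded F(1) by blast
      have xk: "x k \<in> C k" unfolding C_def using closure_of_subset[OF xtop[of "{k..}"]] by auto
      have "x k \<in> topspace X" using xtop by blast
      then have "x k \<in> \<Union>\<V>" using V(3) by (rule subsetD[rotated])
      then have "x k \<in> (\<Union>m\<in>F. topspace X - C m)" unfolding F(2) .
      then obtain m where m: "m \<in> F" "x k \<notin> C m" by blast
      have "m \<le> k" using k m(1) by auto
      then have "C k \<subseteq> C m" by (rule Canti)
      then show False using xk m(2) by blast
    qed
    then obtain q where q: "\<And>m. q \<in> C m" by blast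
    have "C 0 \<subseteq> X closure_of A" unfolding C_def using xA by (intro closure_of_mono) auto
    then have "q \<in> \<Union>\<U>" using q[of 0] h by blast
    then obtain W where W: "W \<in> \<U>" "q \<in> W" by blast
    have Wo: "openin X W" using W h by blast
    obtain n where n: "x n \<in> W" using q[of 0] W(2) Wo unfolding C_def in_closure_of by blast
    obtain m where m: "m \<ge> Suc n" "x m \<in> W" using q[of "Suc n"] W(2) Wo unfolding C_def in_closure_of by blast
    show False using key[of n m W] m n W by simp
  qed
qed

lemma reg_shrink:
  assumes "regular_space X" "openin X W" "y \<in> W"
  shows "\<exists>G. openin X G \<and> y \<in> G \<and> X closure_of G \<subseteq> W"
proof -
  have "closedin X (topspace X - W)" using assms(2) by (rule closedin_diff[OF closedin_topspace])
  moreover have "y \<in> topspace X - (topspace X - W)" using openin_subset[OF assms(2)] assms(3) by blast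
  ultimately obtain G where G: "openin X G" "y \<in> G" "disjnt (topspace X - W) (X closure_of G)"
    using assms(1) unfolding regular_space by blast
  have "X closure_of G \<subseteq> W"
  proof
    fix z assume z: "z \<in> X closure_of G"
    then have "z \<in> topspace X" by (simp add: in_closure_of)
    then show "z \<in> W" using G(3) z unfolding disjnt_def by blast
  qed
  then show ?thesis using G by blast
qed

lemma reg_R0:
  assumes "regular_space X" "t \<in> X closure_of {y}" "openin X Op" "y \<in> Op"
  shows "t \<in> Op"
proof (rule ccontr)
  assume "t \<notin> Op"
  have "closedin X (topspace X - Op)" using assms(3) by (rule closedin_diff[OF closedin_topspace])
  moreover have "y \<in> topspace X - (topspace X - Op)" using openin_subset[OF assms(3)] assms(4) by blast
  ultimately have "\<exists>U V. openin X U \<and> openin X V \<and> y \<in> U \<and> topspace X - Op \<subseteq> V \<and> disjnt U V"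
    by (intro assms(1)[unfolded regular_space_def, rule_format] conjI)
  then obtain U V where UV: "openin X U" "openin X V" "y \<in> U" "topspace X - Op \<subseteq> V" "disjnt U V"
    by blast
  have "t \<in> topspace X" using assms(2) by (simp add: in_closure_of)
  then have "t \<in> V" using UV(4) \<open>t \<notin> Op\<close> by blast
  then have "y \<in> V" using assms(2) UV(2) unfolding in_closure_of by blast
  then show False using UV(3,5) unfolding disjnt_def by blast
qed

lemma ssc_imp_cc:
  assumes reg: "regular_space X" and ssc: "set_star_compact X"
  shows "countably_compact_space X"
  unfolding countably_compact_space_def
proof (intro allI impI)
  fix \<U>
  assume h: "countable \<U> \<and> (\<forall>U\<in>\<U>. openin X U) \<and> topspace X \<subseteq> \<Union>\<U>"
  have hc: "countable \<U>" and ho: "\<And>U. U \<in> \<U> \<Longrightarrow> openin X U" and hcov: "topspace X \<subseteq> \<Union>\<U>"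
    using h by auto
  show "\<exists>\<V>. \<V> \<subseteq> \<U> \<and> finite \<V> \<and> topspace X \<subseteq> \<Union>\<V>"
  proof (rule ccontr)
    assume no: "\<not> ?thesis"
    have ne: "\<U> \<noteq> {}"
    proof
      assume "\<U> = {}"
      then have "{} \<subseteq> \<U> \<and> finite {} \<and> topspace X \<subseteq> \<Union>{}" using hcov by simp
      then show False using no by blast
    qed
    define u where "u = from_nat_into \<U>"
    have uU: "u n \<in> \<U>" for n unfolding u_def using ne by (rule from_nat_into)
    have uo: "openin X (u n)" for n using uU ho by blast
    define Vn where "Vn n = \<Union>(u ` {..n})" for n
    have Vno: "openin X (Vn n)" for n unfolding Vn_def using uo by (intro openin_Union) auto
    have Vnmono: "Vn n \<subseteq> Vn m" if "n \<le> m" for n m unfolding Vn_def using that by (intro Union_mono image_mono) auto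
    have Vncov: "\<exists>n. z \<in> Vn n" if zt: "z \<in> topspace X" for z
    proof -
      obtain U where U: "U \<in> \<U>" "z \<in> U" using hcov zt by blast
      obtain i where "u i = U" unfolding u_def using from_nat_into_surj[OF hc U(1)] by blast
      then show ?thesis unfolding Vn_def using U by blast
    qed
    have Vnnot: "\<exists>z. z \<in> topspace X \<and> z \<notin> Vn n" for n
    proof (rule ccontr)
      assume "\<not> (\<exists>z. z \<in> topspace X \<and> z \<notin> Vn n)"
      then have "topspace X \<subseteq> \<Union>(u ` {..n})" unfolding Vn_def by blast
      moreover have "u ` {..n} \<subseteq> \<U>" using uU by blast
      ultimately show False using no by blast
    qed
    obtain z where z: "\<And>n. z n \<in> topspace X \<and> z n \<notin> Vn n"
      using Vnnot by metis
    have "\<forall>n. \<exists>j. z n \<in> Vn j" using Vncov z by blast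
    then have "\<exists>nx. \<forall>n. z n \<in> Vn (nx n)" by (rule choice)
    then obtain nx where nx: "\<And>n. z n \<in> Vn (nx n)" by blast
    have nxgt: "n < nx n" for n
    proof (rule ccontr)
      assume "\<not> n < nx n"
      then have "Vn (nx n) \<subseteq> Vn n" using Vnmono by simp
      then show False using nx[of n] z[of n] by blast
    qed
    define k where "k = rec_nat 0 (\<lambda>_ j. nx j)"
    have k0: "k 0 = 0" and kS: "\<And>n. k (Suc n) = nx (k n)" by (simp_all add: k_def)
    have ksm: "strict_mono k" unfolding strict_mono_Suc_iff using kS nxgt by simp
    define W where "W n = Vn (k n)" for n
    define y where "y n = z (k n)" for n
    have Wo: "openin X (W n)" for n unfolding W_def by (rule Vno)
    have ynot: "y n \<notin> W n" for n unfolding W_def y_def using z by blast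
    have yin: "y n \<in> W (Suc n)" for n unfolding W_def y_def kS by (rule nx)
    have ytop: "y n \<in> topspace X" for n unfolding y_def using z by blast
    have Wmono: "W n \<subseteq> W m" if "n \<le> m" for n m
      unfolding W_def using that ksm by (intro Vnmono) (simp add: strict_mono_less_eq)
    have Wcov: "\<exists>j. t \<in> W j" if tt: "t \<in> topspace X" for t
    proof -
      obtain i where "t \<in> Vn i" using Vncov tt by blast
      moreover have "i \<le> k i" using ksm by (rule strict_mono_imp_increasing)
      ultimately show ?thesis unfolding W_def using Vnmono by blast
    qed
    have "\<forall>n. \<exists>G. openin X G \<and> y n \<in> G \<and> X closure_of G \<subseteq> W (Suc n)"
      using reg_shrink[OF reg Wo yin] by blast
    then have "\<exists>G. \<forall>n. openin X (G n) \<and> y n \<in> G n \<and> X closure_of (G n) \<subseteq> W (Suc n)" by (rule choice)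
    then obtain G where G: "\<And>n. openin X (G n)" "\<And>n. y n \<in> G n" "\<And>n. X closure_of (G n) \<subseteq> W (Suc n)"
      by blast
    define Op where "Op n = G n - X closure_of (\<Union>(G ` {..<n}))" for n
    have Opo: "openin X (Op n)" for n unfolding Op_def using G(1)
      by (simp add: openin_diff closedin_closure_of)
    have clsub: "X closure_of (\<Union>(G ` {..<n})) \<subseteq> W n" for n
    proof -
      have "X closure_of (\<Union>(G ` {..<n})) = (\<Union>S\<in>G ` {..<n}. X closure_of S)"
        by (rule closure_of_Union) simp
      also have "\<dots> \<subseteq> W n"
      proof (rule UN_least)
        fix S assume "S \<in> G ` {..<n}"
        then obtain i where i: "i < n" "S = G i" by blast
        have "X closure_of S \<subseteq> W (Suc i)" using G(3) i(2) by simp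
        also have "\<dots> \<subseteq> W n" using i(1) by (intro Wmono) simp
        finally show "X closure_of S \<subseteq> W n" .
      qed
      finally show ?thesis .
    qed
    have yOp: "y n \<in> Op n" for n unfolding Op_def using G(2) clsub ynot by blast
    have disj: "Op m \<inter> Op n = {}" if "m < n" for m n
    proof -
      have "G m \<subseteq> \<Union>(G ` {..<n})" using that by blast
      also have "\<dots> \<subseteq> X closure_of (\<Union>(G ` {..<n}))"
        using G(1) openin_subset by (intro closure_of_subset) blast
      finally show ?thesis unfolding Op_def by blast
    qed
    have yOp_eq: "m = n" if "y m \<in> Op n" for m n
    proof (rule ccontr)
      assume "m \<noteq> n"
      then have "m < n \<or> n < m" by arith
      then show False using disj[of m n] disj[of n m] yOp[of m] that by blast
    qed
    have clA: "X closure_of (range y) \<subseteq> \<Union>(range Op)"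
    proof
      fix t assume t: "t \<in> X closure_of (range y)"
      then have ttop: "t \<in> topspace X" by (simp add: in_closure_of)
      then obtain j where j: "t \<in> W j" using Wcov by blast
      have "({..<j} \<union> {j..}) = (UNIV::nat set)" by auto
      then have "range y = y ` {..<j} \<union> y ` {j..}" by (metis image_Un)
      then have "X closure_of (range y) = X closure_of (y ` {..<j}) \<union> X closure_of (y ` {j..})"
        by simp
      moreover have "X closure_of (y ` {j..}) \<subseteq> topspace X - W j"
      proof (rule closure_of_minimal)
        show "y ` {j..} \<subseteq> topspace X - W j"
        proof
          fix s assume "s \<in> y ` {j..}"
          then obtain i where i: "i \<ge> j" "s = y i" by blast
          have "y i \<notin> W j" using ynot[of i] Wmono[OF i(1)] by blast
          then show "s \<in> topspace X - W j" using i ytop by blast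
        qed
        show "closedin X (topspace X - W j)" using Wo by (rule closedin_diff[OF closedin_topspace])
      qed
      ultimately have "t \<in> X closure_of (y ` {..<j})" using t j by blast
      moreover have "y ` {..<j} = \<Union>((\<lambda>i. {y i}) ` {..<j})" by blast
      ultimately have "t \<in> X closure_of (\<Union>((\<lambda>i. {y i}) ` {..<j}))" by simp
      also have "\<dots> = (\<Union>S\<in>(\<lambda>i. {y i}) ` {..<j}. X closure_of S)"
        by (rule closure_of_Union) simp
      finally obtain i where "t \<in> X closure_of {y i}" by blast
      then have "t \<in> Op i" using reg_R0[OF reg _ Opo yOp] by blast
      then show "t \<in> \<Union>(range Op)" by blast
    qed
    have "\<exists>\<V>. \<V> \<subseteq> range Op \<and> finite \<V> \<and> range y \<subseteq> star (\<Union>\<V>) (range Op)"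
    proof -
      have ssc': "\<And>A \<W>. A \<noteq> {} \<Longrightarrow> A \<subseteq> topspace X \<Longrightarrow> (\<forall>U\<in>\<W>. openin X U) \<Longrightarrow> X closure_of A \<subseteq> \<Union>\<W>
          \<Longrightarrow> \<exists>\<V>. \<V> \<subseteq> \<W> \<and> finite \<V> \<and> A \<subseteq> star (\<Union>\<V>) \<W>"
        using ssc unfolding set_star_compact_def by blast
      show ?thesis
      proof (rule ssc')
        show "range y \<noteq> {}" by simp
        show "range y \<subseteq> topspace X" using ytop by blast
        show "\<forall>U\<in>range Op. openin X U" using Opo by blast
        show "X closure_of range y \<subseteq> \<Union> (range Op)" by (rule clA)
      qed
    qed
    then obtain \<V> where V: "\<V> \<subseteq> range Op" "finite \<V>" "range y \<subseteq> star (\<Union>\<V>) (range Op)"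
      by blast
    from finite_subset_image[OF V(2) V(1)]
    obtain F where F: "finite F" "\<V> = Op ` F"
      by (elim exE conjE) (rule that)
    obtain N where N: "F \<subseteq> {..<N}" using finite_nat_bounded F(1) by blast
    have "y N \<in> star (\<Union>\<V>) (range Op)" using V(3) by blast
    then obtain m where m: "y N \<in> Op m" "Op m \<inter> \<Union>\<V> \<noteq> {}" unfolding star_def by blast
    have "m = N" using yOp_eq m(1) by blast
    then obtain i where i: "i \<in> F" "Op N \<inter> Op i \<noteq> {}" using m(2) F(2) by blast
    have "i < N" using i(1) N by blast
    then show False using disj[of i N] i(2) by blast
  qed
qed

theorem proposition1p2:
  fixes X :: "'a topology"
  assumes "regular_space X"
  shows "set_star_compact X \<longleftrightarrow> countably_compact_space X"
  using cc_imp_ssc ssc_imp_cc assms by blast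

end
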